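(* Let $\mathcal{H}$ be a finite-dimensional complex Hilbert space, $\mathbf{C}\subseteq\mathcal{H}$ a subspace (code space) and $P$ the orthogonal projector onto $\mathbf{C}$. Let $\mathcal{N}: B(\mathcal{H})\to B(\mathcal{H})$ be a semi-positive trace-preserving map with an operator-sum representation $\mathcal{N}(\rho)=\sum_i \operatorname{sign}(i)E_i\rho E_i^\dagger$, where $E_i\in B(\mathcal{H})$ and $\operatorname{sign}(i)=-1$ for $i$ in a nonempty subset $\mathbf{J}$ of the indices and $\operatorname{sign}(i)=1$ otherwise. If there is a Hermitian matrix $\alpha=(\alpha_{ij})$ such that $$P E_i^\dagger E_j P=\alpha_{ij}P\quad\text{for all } i,j,$$ then there exists a CPTP map $\mathcal{R}: B(\mathcal{H})\to B(\mathcal{H})$ such that $\mathcal{R}(\mathcal{N}(P\sigma P))=P\sigma P$ for every $\sigma\in B(\mathcal{H})$ (in particular $\mathcal{R}\circ\mathcal{N}(\rho)=\rho$ for every density matrix $\rho$ supported on $\mathbf{C}$).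
   Context: A density matrix is a positive semidefinite operator of trace one. A linear map $\Psi$ on $B(\mathcal{H})$ is Hermitian-preserving if $\Psi(X^\dagger)=\Psi(X)^\dagger$, trace-preserving if $\operatorname{Tr}\Psi(X)=\operatorname{Tr}X$, and semi-positive if it is Hermitian-preserving and there exists an invertible density matrix $\rho$ such that $\Psi(\rho)$ is an invertible density matrix. *)

theory Defs
  imports "HOL-Analysis.Analysis"
begin

type_synonym 'n op = "complex^'n^'n"

definition adj :: "'n::finite op \<Rightarrow> 'n op" where
  "adj A = (\<chi> i j. cnj (A $ j $ i))"

definition mtrace :: "'n::finite op \<Rightarrow> complex" where
  "mtrace A = (\<Sum>i\<in>UNIV. A $ i $ i)"

definition cinner :: "complex^'n::finite \<Rightarrow> complex^'n \<Rightarrow> complex" where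
  "cinner v w = (\<Sum>i\<in>UNIV. cnj (v $ i) * w $ i)"

definition cnonneg :: "complex \<Rightarrow> bool" where
  "cnonneg z \<longleftrightarrow> Im z = 0 \<and> 0 \<le> Re z"

definition smult_op :: "complex \<Rightarrow> 'n::finite op \<Rightarrow> 'n op" where
  "smult_op c A = (\<chi> i j. c * A $ i $ j)"

definition psd :: "'n::finite op \<Rightarrow> bool" where
  "psd A \<longleftrightarrow> (\<forall>v. cnonneg (cinner v (A *v v)))"

definition density :: "'n::finite op \<Rightarrow> bool" where
  "density A \<longleftrightarrow> psd A \<and> mtrace A = 1"

definition herm_preserving :: "('n::finite op \<Rightarrow> 'n op) \<Rightarrow> bool" where
  "herm_preserving \<Psi> \<longleftrightarrow> (\<forall>X. \<Psi> (adj X) = adj (\<Psi> X))"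

definition trace_preserving :: "('n::finite op \<Rightarrow> 'n op) \<Rightarrow> bool" where
  "trace_preserving \<Psi> \<longleftrightarrow> (\<forall>X. mtrace (\<Psi> X) = mtrace X)"

definition semi_positive :: "('n::finite op \<Rightarrow> 'n op) \<Rightarrow> bool" where
  "semi_positive \<Psi> \<longleftrightarrow> herm_preserving \<Psi> \<and>
     (\<exists>\<rho>. density \<rho> \<and> invertible \<rho> \<and> density (\<Psi> \<rho>) \<and> invertible (\<Psi> \<rho>))"

definition clinear_map :: "('n::finite op \<Rightarrow> 'n op) \<Rightarrow> bool" where
  "clinear_map \<Psi> \<longleftrightarrow> (\<forall>X Y. \<Psi> (X + Y) = \<Psi> X + \<Psi> Y) \<and>
                       (\<forall>c X. \<Psi> (smult_op c X) = smult_op c (\<Psi> X))"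

text \<open>Positivity of an m-by-m block operator on C^m \<otimes> H, blocks X a b (a,b < m).\<close>
definition block_psd :: "nat \<Rightarrow> (nat \<Rightarrow> nat \<Rightarrow> 'n::finite op) \<Rightarrow> bool" where
  "block_psd m X \<longleftrightarrow>
     (\<forall>v :: nat \<Rightarrow> complex^'n. cnonneg (\<Sum>a<m. \<Sum>b<m. cinner (v a) (X a b *v v b)))"

text \<open>Complete positivity: id_m \<otimes> \<Psi> is positive for every ancilla dimension m.\<close>
definition completely_positive :: "('n::finite op \<Rightarrow> 'n op) \<Rightarrow> bool" where
  "completely_positive \<Psi> \<longleftrightarrow>
     (\<forall>m X. block_psd m X \<longrightarrow> block_psd m (\<lambda>a b. \<Psi> (X a b)))"

definition CPTP :: "('n::finite op \<Rightarrow> 'n op) \<Rightarrow> bool" where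
  "CPTP \<Psi> \<longleftrightarrow> clinear_map \<Psi> \<and> completely_positive \<Psi> \<and> trace_preserving \<Psi>"

definition csubspace_vec :: "(complex^'n::finite) set \<Rightarrow> bool" where
  "csubspace_vec C \<longleftrightarrow> 0 \<in> C \<and> (\<forall>x\<in>C. \<forall>y\<in>C. x + y \<in> C) \<and> (\<forall>c. \<forall>x\<in>C. c *s x \<in> C)"

definition orth_projector_onto :: "'n::finite op \<Rightarrow> (complex^'n) set \<Rightarrow> bool" where
  "orth_projector_onto P C \<longleftrightarrow> P ** P = P \<and> adj P = P \<and> range (\<lambda>v. P *v v) = C"

end

theory Submission
  imports Defs
begin


lemma cnj_mult_self: "cnj z * z = complex_of_real ((cmod z)^2)"
  by (metis complex_norm_square mult.commute)

lemma mtrace_trace: "mtrace A = trace A" unfolding mtrace_def trace_def ..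

lemma mat_comp: "(A ** B) $ i $ j = (\<Sum>k\<in>UNIV. A $ i $ k * B $ k $ j)"
  by (simp add: matrix_matrix_mult_def)

lemma adj_comp[simp]: "adj A $ i $ j = cnj (A $ j $ i)"
  by (simp add: adj_def)

lemma smult_comp[simp]: "smult_op c A $ i $ j = c * A $ i $ j"
  by (simp add: smult_op_def)

lemma adj_adj[simp]: "adj (adj A) = A"
  by (simp add: vec_eq_iff)

lemma adj_mult: "adj (A ** B) = adj B ** adj A"
  by (simp add: vec_eq_iff mat_comp mult.commute)

lemma adj_add: "adj (A + B) = adj A + adj B"
  by (simp add: vec_eq_iff)

lemma adj_diff: "adj (A - B) = adj A - adj B"
  by (simp add: vec_eq_iff)

lemma adj_zero[simp]: "adj 0 = 0"
  by (simp add: vec_eq_iff)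

lemma adj_mat1[simp]: "adj (mat 1) = mat 1"
  by (simp add: vec_eq_iff mat_def)

lemma adj_smult: "adj (smult_op c A) = smult_op (cnj c) (adj A)"
  by (simp add: vec_eq_iff)

lemma adj_sum: "adj (\<Sum>k\<in>K. f k) = (\<Sum>k\<in>K. adj (f k))"
  by (induction K rule: infinite_finite_induct) (auto simp: adj_add)

lemma smult_mul_left: "smult_op c A ** B = smult_op c (A ** B)"
  by (simp add: vec_eq_iff mat_comp sum_distrib_left mult.assoc)

lemma smult_mul_right: "A ** smult_op c B = smult_op c (A ** B)"
  by (simp add: vec_eq_iff mat_comp sum_distrib_left mult.assoc mult.left_commute)

lemma smult_smult: "smult_op a (smult_op b A) = smult_op (a*b) A"
  by (simp add: vec_eq_iff mult.assoc)

lemma smult_one[simp]: "smult_op 1 A = A"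
  by (simp add: vec_eq_iff)

lemma smult_zero_op[simp]: "smult_op c 0 = 0"
  by (simp add: vec_eq_iff)

lemma smult_zero_sc[simp]: "smult_op 0 A = 0"
  by (simp add: vec_eq_iff)

lemma smult_add: "smult_op c (A + B) = smult_op c A + smult_op c B"
  by (simp add: vec_eq_iff algebra_simps)

lemma smult_add_sc: "smult_op (a + b) A = smult_op a A + smult_op b A"
  by (simp add: vec_eq_iff algebra_simps)

lemma smult_sum: "smult_op c (\<Sum>k\<in>K. f k) = (\<Sum>k\<in>K. smult_op c (f k))"
  by (induction K rule: infinite_finite_induct) (auto simp: smult_add)

lemma smult_sum_sc: "smult_op (\<Sum>k\<in>K. f k) A = (\<Sum>k\<in>K. smult_op (f k) A)"
  by (induction K rule: infinite_finite_induct) (auto simp: smult_add_sc)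

lemma mul_sum_right: "A ** (\<Sum>k\<in>K. f k) = (\<Sum>k\<in>K. A ** f k)"
  by (induction K rule: infinite_finite_induct) (auto simp: matrix_add_ldistrib)

lemma mul_sum_left: "(\<Sum>k\<in>K. f k) ** A = (\<Sum>k\<in>K. f k ** A)"
  by (induction K rule: infinite_finite_induct) (auto simp: vec_eq_iff mat_comp sum.distrib algebra_simps)

lemma mul_zero_left[simp]: "(0::'n::finite op) ** A = 0"
  by (simp add: vec_eq_iff mat_comp)

lemma mul_zero_right[simp]: "A ** (0::'n::finite op) = 0"
  by (simp add: vec_eq_iff mat_comp)

lemma mul_diff_left: "(A - B) ** (C::'n::finite op) = A ** C - B ** C"
  by (simp add: vec_eq_iff mat_comp algebra_simps sum_subtractf)

lemma mul_diff_right: "(C::'n::finite op) ** (A - B) = C ** A - C ** B"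
  by (simp add: vec_eq_iff mat_comp algebra_simps sum_subtractf)

lemma mtrace_sum: "mtrace (\<Sum>k\<in>K. f k) = (\<Sum>k\<in>K. mtrace (f k))"
  by (induction K rule: infinite_finite_induct) (auto simp: mtrace_def sum.distrib)

lemma mtrace_smult: "mtrace (smult_op c A) = c * mtrace A"
  by (simp add: mtrace_def sum_distrib_left)

lemma mtrace_cyc: "mtrace (A ** B) = mtrace (B ** A)"
  unfolding mtrace_trace by (rule trace_mul_sym)

lemma smult_mat_vec: "smult_op c A *v v = c *s (A *v v)"
  by (simp add: vec_eq_iff matrix_vector_mult_def sum_distrib_left mult.assoc)

lemma sum_mat_vec: "(\<Sum>k\<in>K. f k) *v v = (\<Sum>k\<in>K. f k *v v)"
  by (induction K rule: infinite_finite_induct) (auto simp: matrix_vector_mult_add_rdistrib)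

lemma cinner_adj: "cinner u (A *v v) = cinner (adj A *v u) v"
proof -
  have "cinner u (A *v v) = (\<Sum>i\<in>UNIV. \<Sum>j\<in>UNIV. cnj (u$i) * (A$i$j * v$j))"
    by (simp add: cinner_def matrix_vector_mult_def sum_distrib_left)
  also have "\<dots> = (\<Sum>j\<in>UNIV. \<Sum>i\<in>UNIV. cnj (u$i) * (A$i$j * v$j))"
    by (rule sum.swap)
  also have "\<dots> = cinner (adj A *v u) v"
    by (simp add: cinner_def matrix_vector_mult_def sum_distrib_left sum_distrib_right mult_ac)
  finally show ?thesis .
qed

lemma cinner_sum_right: "cinner u (\<Sum>k\<in>K. f k) = (\<Sum>k\<in>K. cinner u (f k))"
  unfolding cinner_def by (induction K rule: infinite_finite_induct) (auto simp: sum.distrib algebra_simps)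

lemma cinner_sum_left: "cinner (\<Sum>k\<in>K. f k) u = (\<Sum>k\<in>K. cinner (f k) u)"
  unfolding cinner_def by (induction K rule: infinite_finite_induct) (auto simp: sum.distrib algebra_simps)

lemma cinner_smult_right: "cinner u (c *s v) = c * cinner u v"
  unfolding cinner_def by (simp add: sum_distrib_left algebra_simps)

lemma cinner_smult_left: "cinner (c *s u) v = cnj c * cinner u v"
  unfolding cinner_def by (simp add: sum_distrib_left algebra_simps)

lemma cinner_add_right: "cinner u (v + w) = cinner u v + cinner u w"
  unfolding cinner_def by (simp add: sum.distrib algebra_simps)

lemma cinner_add_left: "cinner (v + w) u = cinner v u + cinner w u"
  unfolding cinner_def by (simp add: sum.distrib algebra_simps)

lemma cinner_diff_right: "cinner u (v - w) = cinner u v - cinner u w"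
  unfolding cinner_def by (simp add: sum_subtractf algebra_simps)

lemma cinner_diff_left: "cinner (v - w) u = cinner v u - cinner w u"
  unfolding cinner_def by (simp add: sum_subtractf algebra_simps)

lemma cinner_zero_left[simp]: "cinner 0 u = 0" unfolding cinner_def by simp
lemma cinner_zero_right[simp]: "cinner u 0 = 0" unfolding cinner_def by simp

lemma cinner_cnj: "cinner v u = cnj (cinner u v)"
  unfolding cinner_def by (simp add: mult.commute)

lemma cinner_self_real: "cinner v v = of_real (\<Sum>i\<in>UNIV. (cmod (v $ i))^2)"
  unfolding cinner_def by (simp add: cnj_mult_self)

lemma cinner_self_eq0: "cinner v v = 0 \<longleftrightarrow> v = 0"
proof -
  have "cinner v v = 0 \<longleftrightarrow> (\<Sum>i\<in>UNIV. (cmod (v $ i))^2) = 0"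
    by (simp add: cinner_self_real del: of_real_sum of_real_power)
  also have "\<dots> \<longleftrightarrow> (\<forall>i. (cmod (v $ i))^2 = 0)"
    by (simp add: sum_nonneg_eq_0_iff)
  also have "\<dots> \<longleftrightarrow> v = 0" by (simp add: vec_eq_iff)
  finally show ?thesis .
qed

lemma cnonneg_add: "cnonneg a \<Longrightarrow> cnonneg b \<Longrightarrow> cnonneg (a + b)"
  by (simp add: cnonneg_def)

lemma cnonneg_sum: "(\<And>k. k \<in> K \<Longrightarrow> cnonneg (f k)) \<Longrightarrow> cnonneg (\<Sum>k\<in>K. f k)"
  by (induction K rule: infinite_finite_induct) (auto simp: cnonneg_add cnonneg_def)

lemma adj_mul_self_zero: assumes "adj X ** X = 0" shows "X = 0"
proof -
  have "\<forall>a. (\<Sum>t\<in>UNIV. (cmod (X $ t $ a))^2) = 0"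
  proof
    fix a
    have "(adj X ** X) $ a $ a = of_real (\<Sum>t\<in>UNIV. (cmod (X $ t $ a))^2)"
      by (simp add: mat_comp cnj_mult_self)
    then have "complex_of_real (\<Sum>t\<in>UNIV. (cmod (X $ t $ a))^2) = 0" using assms by (metis zero_index)
    then show "(\<Sum>t\<in>UNIV. (cmod (X $ t $ a))^2) = 0" by (simp only: of_real_eq_0_iff)
  qed
  then show ?thesis by (simp add: sum_nonneg_eq_0_iff vec_eq_iff)
qed



lemma mul_add_left: "(A + B) ** (C::'n::finite op) = A ** C + B ** C"
  by (simp add: vec_eq_iff mat_comp sum.distrib algebra_simps)

lemma cinner_conj3: "cinner u ((A ** X ** adj A) *v v) = cinner (adj A *v u) (X *v (adj A *v v))"
  by (simp add: cinner_adj matrix_vector_mul_assoc[symmetric])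

lemma kraus_CPTP:
  fixes A :: "'k \<Rightarrow> 'n::finite op"
  assumes fin: "finite K" and id: "(\<Sum>k\<in>K. adj (A k) ** A k) = mat 1"
  shows "CPTP (\<lambda>Y. \<Sum>k\<in>K. A k ** Y ** adj (A k))"
  unfolding CPTP_def
proof (intro conjI)
  show "clinear_map (\<lambda>Y. \<Sum>k\<in>K. A k ** Y ** adj (A k))"
    unfolding clinear_map_def
    by (simp add: matrix_add_ldistrib mul_add_left sum.distrib smult_mul_left smult_mul_right smult_sum)
  show "completely_positive (\<lambda>Y. \<Sum>k\<in>K. A k ** Y ** adj (A k))"
    unfolding completely_positive_def
  proof (intro allI impI)
    fix m and X :: "nat \<Rightarrow> nat \<Rightarrow> 'n op"
    assume bp: "block_psd m X"
    show "block_psd m (\<lambda>a b. \<Sum>k\<in>K. A k ** X a b ** adj (A k))"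
      unfolding block_psd_def
    proof
      fix v :: "nat \<Rightarrow> complex^'n"
      have "(\<Sum>a<m. \<Sum>b<m. cinner (v a) ((\<Sum>k\<in>K. A k ** X a b ** adj (A k)) *v v b))
          = (\<Sum>a<m. \<Sum>b<m. \<Sum>k\<in>K. cinner (adj (A k) *v v a) (X a b *v (adj (A k) *v v b)))"
        by (simp add: sum_mat_vec cinner_sum_right cinner_conj3)
      also have "\<dots> = (\<Sum>k\<in>K. \<Sum>a<m. \<Sum>b<m. cinner (adj (A k) *v v a) (X a b *v (adj (A k) *v v b)))"
        by (subst sum.swap, rule sum.cong[OF refl], rule sum.swap)
      finally show "cnonneg (\<Sum>a<m. \<Sum>b<m. cinner (v a) ((\<Sum>k\<in>K. A k ** X a b ** adj (A k)) *v v b))"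
        using bp unfolding block_psd_def
        by (simp add: cnonneg_sum)
    qed
  qed
  show "trace_preserving (\<lambda>Y. \<Sum>k\<in>K. A k ** Y ** adj (A k))"
    unfolding trace_preserving_def
  proof
    fix Y :: "'n op"
    have "mtrace (\<Sum>k\<in>K. A k ** Y ** adj (A k)) = (\<Sum>k\<in>K. mtrace (adj (A k) ** A k ** Y))"
      by (simp add: mtrace_sum mtrace_cyc[of "A _ ** Y"] matrix_mul_assoc)
    also have "\<dots> = mtrace ((\<Sum>k\<in>K. adj (A k) ** A k) ** Y)"
      by (simp add: mtrace_sum mul_sum_left)
    finally show "mtrace (\<Sum>k\<in>K. A k ** Y ** adj (A k)) = mtrace Y" using id by simp
  qed
qed



definition cspan_fam :: "('i \<Rightarrow> complex^'n::finite) \<Rightarrow> 'i set \<Rightarrow> (complex^'n) set" where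
  "cspan_fam w I = {v. \<exists>\<beta>. v = (\<Sum>j\<in>I. \<beta> j *s w j)}"

lemma cspan_add: "u \<in> cspan_fam w I \<Longrightarrow> v \<in> cspan_fam w I \<Longrightarrow> u + v \<in> cspan_fam w I"
  unfolding cspan_fam_def
proof clarify
  fix a b assume "u = (\<Sum>j\<in>I. a j *s w j)" "v = (\<Sum>j\<in>I. b j *s w j)"
  show "\<exists>\<beta>. (\<Sum>j\<in>I. a j *s w j) + (\<Sum>j\<in>I. b j *s w j) = (\<Sum>j\<in>I. \<beta> j *s w j)"
    by (rule exI[of _ "\<lambda>j. a j + b j"]) (simp add: sum.distrib vector_sadd_rdistrib)
qed

lemma smult_sum_vec: fixes f :: "'k \<Rightarrow> complex^'n::finite" shows "c *s (\<Sum>k\<in>K. f k) = (\<Sum>k\<in>K. c *s f k)"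
  by (induction K rule: infinite_finite_induct) (auto simp: vector_add_ldistrib)

lemma cspan_smult: "u \<in> cspan_fam w I \<Longrightarrow> c *s u \<in> cspan_fam w I"
  unfolding cspan_fam_def
proof clarify
  fix a assume "u = (\<Sum>j\<in>I. a j *s w j)"
  show "\<exists>\<beta>. c *s (\<Sum>j\<in>I. a j *s w j) = (\<Sum>j\<in>I. \<beta> j *s w j)"
    by (rule exI[of _ "\<lambda>j. c * a j"]) (simp add: smult_sum_vec)
qed

lemma cspan_zero: "0 \<in> cspan_fam w I"
  unfolding cspan_fam_def by (rule CollectI, rule exI[of _ "\<lambda>_. 0"]) simp

lemma cspan_sum: "(\<And>k. k \<in> K \<Longrightarrow> f k \<in> cspan_fam w I) \<Longrightarrow> (\<Sum>k\<in>K. f k) \<in> cspan_fam w I"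
  by (induction K rule: infinite_finite_induct) (auto simp: cspan_zero cspan_add)

lemma cspan_diff: "u \<in> cspan_fam w I \<Longrightarrow> v \<in> cspan_fam w I \<Longrightarrow> u - v \<in> cspan_fam w I"
  using cspan_add[of u w I "(-1) *s v"] cspan_smult[of v w I "-1"]
  by (simp add: vector_sneg_minus1[symmetric])

lemma cspan_gen: assumes "finite I" "i \<in> I" shows "w i \<in> cspan_fam w I"
  unfolding cspan_fam_def
proof (rule CollectI, rule exI[of _ "\<lambda>j. if j = i then 1 else 0"])
  show "w i = (\<Sum>j\<in>I. (if j = i then 1 else 0) *s w j)"
    using assms by (simp add: if_distrib[of "\<lambda>c. c *s _"] sum.delta cong: if_cong)
qed

lemma cspan_mono: assumes "finite I'" "I \<subseteq> I'" "u \<in> cspan_fam w I" shows "u \<in> cspan_fam w I'"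
proof -
  obtain a where a: "u = (\<Sum>j\<in>I. a j *s w j)" using assms(3) unfolding cspan_fam_def by blast
  have "(\<Sum>j\<in>I'. (if j \<in> I then a j else 0) *s w j) = (\<Sum>j\<in>I'. if j \<in> I then a j *s w j else 0)"
    by (rule sum.cong) auto
  also have "\<dots> = (\<Sum>j\<in>I' \<inter> I. a j *s w j)"
    using assms(1) by (simp add: sum.inter_restrict)
  also have "I' \<inter> I = I" using assms(2) by blast
  finally show ?thesis unfolding cspan_fam_def using a
    by (intro CollectI exI[of _ "\<lambda>j. if j \<in> I then a j else 0"]) simp
qed

definition orthonormal :: "nat \<Rightarrow> (nat \<Rightarrow> complex^'n::finite) \<Rightarrow> bool" where
  "orthonormal r f \<longleftrightarrow> (\<forall>k<r. \<forall>k'<r. cinner (f k) (f k') = (if k = k' then 1 else 0))"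

lemma sum_delta_on: "(k::nat) < r \<Longrightarrow> (\<Sum>k'<r. c k' * (if k = k' then 1 else 0)) = (c k :: complex)"
proof -
  assume k: "k < r"
  have "(\<Sum>k'<r. c k' * (if k = k' then 1 else 0)) = (\<Sum>k'<r. if k = k' then c k' else 0)"
    by (rule sum.cong) auto
  also have "\<dots> = c k" using k by (subst sum.delta') auto
  finally show ?thesis .
qed

lemma gs_step:
  assumes on: "orthonormal r f" and y: "y = x - (\<Sum>k<r. cinner (f k) x *s f k)"
  shows "\<And>k. k < r \<Longrightarrow> cinner (f k) y = 0"
proof -
  fix k assume k: "k < r"
  have "cinner (f k) y = cinner (f k) x - (\<Sum>k'<r. cinner (f k') x * cinner (f k) (f k'))"
    by (simp add: y cinner_diff_right cinner_sum_right cinner_smult_right)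
  also have "\<dots> = 0" using on k unfolding orthonormal_def by (simp add: sum_delta_on)
  finally show "cinner (f k) y = 0" .
qed

lemma gram_schmidt:
  fixes w :: "'i \<Rightarrow> complex^'n::finite"
  assumes "finite I"
  shows "\<exists>r f. orthonormal r f \<and> (\<forall>k<r. f k \<in> cspan_fam w I) \<and>
           (\<forall>i\<in>I. w i = (\<Sum>k<r. cinner (f k) (w i) *s f k))"
  using assms
proof (induction I rule: finite_induct)
  case empty
  show ?case by (rule exI[of _ 0]) (simp add: orthonormal_def)
next
  case (insert x I)
  then obtain r f where on: "orthonormal r f" and sp: "\<forall>k<r. f k \<in> cspan_fam w I"
     and rep: "\<forall>i\<in>I. w i = (\<Sum>k<r. cinner (f k) (w i) *s f k)" by blast
  have fin': "finite (insert x I)" using insert by simp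
  have sp': "\<forall>k<r. f k \<in> cspan_fam w (insert x I)"
    using sp cspan_mono[OF fin'] by blast
  define y where "y = w x - (\<Sum>k<r. cinner (f k) (w x) *s f k)"
  have orth: "\<And>k. k < r \<Longrightarrow> cinner (f k) y = 0" using gs_step[OF on y_def] .
  show ?case
  proof (cases "y = 0")
    case True
    show ?thesis
    proof (intro exI conjI)
      show "orthonormal r f" by (rule on)
      show "\<forall>k<r. f k \<in> cspan_fam w (insert x I)" by (rule sp')
      show "\<forall>i\<in>insert x I. w i = (\<Sum>k<r. cinner (f k) (w i) *s f k)"
        using rep True y_def by auto
    qed
  next
    case False
    define t where "t = (\<Sum>i\<in>UNIV. (cmod (y $ i))^2)"
    have yy: "cinner y y = of_real t" unfolding t_def by (rule cinner_self_real)
    have "t \<noteq> 0" using False cinner_self_eq0[of y] yy by auto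
    moreover have "t \<ge> 0" unfolding t_def by (simp add: sum_nonneg)
    ultimately have tpos: "t > 0" by simp
    define g where "g = complex_of_real (1 / sqrt t) *s y"
    have gg: "cinner g g = 1"
      unfolding g_def using tpos
      by (simp add: cinner_smult_left cinner_smult_right yy power2_eq_square[symmetric]
           flip: of_real_mult of_real_power)
    have gf: "\<And>k. k < r \<Longrightarrow> cinner g (f k) = 0"
      unfolding g_def using orth by (simp add: cinner_smult_left cinner_cnj[of y])
    have fg: "\<And>k. k < r \<Longrightarrow> cinner (f k) g = 0"
      unfolding g_def using orth by (simp add: cinner_smult_right)
    define f' where "f' = f(r := g)"
    have f'f: "\<And>k. k < r \<Longrightarrow> f' k = f k" unfolding f'_def by simp
    have f'r: "f' r = g" unfolding f'_def by simp
    have sumf': "\<And>c. (\<Sum>k<Suc r. c k *s f' k) = (\<Sum>k<r. c k *s f k) + c r *s g"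
      by (simp add: f'f f'r)
    show ?thesis
    proof (intro exI conjI)
      show "orthonormal (Suc r) f'"
        unfolding orthonormal_def
      proof (intro allI impI)
        fix k k' assume "k < Suc r" "k' < Suc r"
        then consider "k < r" "k' < r" | "k = r" "k' < r" | "k < r" "k' = r" | "k = r" "k' = r"
          by linarith
        then show "cinner (f' k) (f' k') = (if k = k' then 1 else 0)"
          by cases (use on gg gf fg f'f f'r in \<open>auto simp: orthonormal_def\<close>)
      qed
      have gsp: "g \<in> cspan_fam w (insert x I)"
        unfolding g_def y_def
        by (intro cspan_smult cspan_diff cspan_sum cspan_gen[OF fin'])
           (use sp' in auto)
      show "\<forall>k<Suc r. f' k \<in> cspan_fam w (insert x I)"
        using sp' gsp f'f f'r by (metis less_Suc_eq)
      show "\<forall>i\<in>insert x I. w i = (\<Sum>k<Suc r. cinner (f' k) (w i) *s f' k)"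
      proof
        fix i assume i: "i \<in> insert x I"
        have eq: "(\<Sum>k<Suc r. cinner (f' k) (w i) *s f' k) =
            (\<Sum>k<r. cinner (f k) (w i) *s f k) + cinner g (w i) *s g"
          by (simp add: f'f f'r)
        show "w i = (\<Sum>k<Suc r. cinner (f' k) (w i) *s f' k)"
        proof (cases "i = x")
          case True
          have wx: "w x = y + (\<Sum>k<r. cinner (f k) (w x) *s f k)" unfolding y_def by simp
          have "cinner g (w x) = cinner g y"
            by (subst wx) (simp add: cinner_add_right cinner_sum_right cinner_smult_right gf)
          also have "\<dots> = complex_of_real (sqrt t)"
            unfolding g_def using tpos
            by (simp add: cinner_smult_left yy real_div_sqrt flip: of_real_mult of_real_divide)
          finally have "cinner g (w x) *s g = y"
            unfolding g_def using tpos
            by (simp add: vector_smult_assoc flip: of_real_mult)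
          then show ?thesis using eq True wx by (simp add: add.commute)
        next
          case False
          then have iI: "i \<in> I" using i by simp
          have "cinner g (w i) = 0"
            by (subst rep[rule_format, OF iI]) (simp add: cinner_sum_right cinner_smult_right gf)
          then show ?thesis using eq rep iI by simp
        qed
      qed
    qed
  qed
qed



lemma inner_from_P:
  assumes h: "P ** adj A ** B ** P = smult_op z P" and Pc: "P *v c = c" and Ph: "adj P = P"
    and cc: "cinner c c = 1"
  shows "cinner (A *v c) (B *v c) = z"
proof -
  have "cinner (A *v c) (B *v c) = cinner c (adj A *v (B *v c))"
    using cinner_adj[of c "adj A" "B *v c"] by simp
  also have "\<dots> = cinner (P *v c) ((adj A ** B) *v (P *v c))"
    by (simp add: Pc matrix_vector_mul_assoc)
  also have "\<dots> = cinner c (P *v ((adj A ** B) *v (P *v c)))"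
    using cinner_adj[of c P] Ph by simp
  also have "\<dots> = cinner c ((P ** adj A ** B ** P) *v c)"
    by (simp add: matrix_vector_mul_assoc matrix_mul_assoc)
  also have "\<dots> = z" by (simp add: h smult_mat_vec cinner_smult_right Pc cc)
  finally show ?thesis .
qed

lemma mat_vec_smult: "A *v (a *s u) = a *s (A *v (u::complex^'n::finite))"
  by (simp add: vec_eq_iff matrix_vector_mult_def sum_distrib_left algebra_simps)

lemma sum_mult_delta: "(\<Sum>k\<in>(UNIV::'n::finite set). (g k::complex) * (if k = q then 1 else 0)) = g q"
proof -
  have "(\<Sum>k\<in>(UNIV::'n set). (g k::complex) * (if k = q then 1 else 0)) = (\<Sum>k\<in>UNIV. if k = q then g k else 0)"
    by (rule sum.cong) auto
  then show ?thesis by simp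
qed

lemma M_test:
  fixes M :: "'n::finite op"
  assumes "\<And>X. mtrace (M ** X) = mtrace X"
  shows "M = mat 1"
proof -
  have "M $ p $ q = mat 1 $ p $ q" for p q
  proof -
    define X where "X = ((\<chi> a b. if a = q \<and> b = p then 1 else 0) :: 'n op)"
    have "mtrace (M ** X) = (\<Sum>i\<in>UNIV. \<Sum>k\<in>UNIV. M $ i $ k * (if k = q \<and> i = p then 1 else 0))"
      by (simp add: X_def mtrace_def mat_comp)
    also have "\<dots> = (\<Sum>i\<in>UNIV. if i = p then M $ i $ q else 0)"
      by (rule sum.cong[OF refl], case_tac "x = p") (simp_all add: sum_mult_delta)
    also have "\<dots> = M $ p $ q" by simp
    finally have "mtrace (M ** X) = M $ p $ q" .
    moreover have "mtrace X = mat 1 $ p $ q"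
      by (cases "p = q") (auto simp: X_def mtrace_def mat_def intro!: sum.neutral)
    ultimately show ?thesis using assms by simp
  qed
  then show ?thesis by (simp add: vec_eq_iff)
qed

lemma unit_sum:
  fixes j0 :: "'n::finite"
  shows "(\<Sum>j\<in>UNIV. adj ((\<chi> a b. if a = j0 \<and> b = j then 1 else 0) :: 'n op) **
            ((\<chi> a b. if a = j0 \<and> b = j then 1 else 0) :: 'n op)) = mat 1"
proof -
  have "(\<Sum>j\<in>UNIV. adj ((\<chi> a b. if a = j0 \<and> b = j then 1 else 0) :: 'n op) **
            ((\<chi> a b. if a = j0 \<and> b = j then 1 else 0) :: 'n op)) $ p $ q = mat 1 $ p $ q" for p q
  proof -
    have e: "(adj ((\<chi> a b. if a = j0 \<and> b = j then 1 else 0) :: 'n op) **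
            ((\<chi> a b. if a = j0 \<and> b = j then 1 else 0) :: 'n op)) $ p $ q
          = (if p = j \<and> q = j then 1 else 0)" for j
    proof -
      have "(adj ((\<chi> a b. if a = j0 \<and> b = j then 1 else 0) :: 'n op) **
            ((\<chi> a b. if a = j0 \<and> b = j then 1 else 0) :: 'n op)) $ p $ q
          = (\<Sum>t\<in>UNIV. if t = j0 then (if p = j \<and> q = j then 1 else 0) else 0)"
        unfolding mat_comp by (rule sum.cong) auto
      also have "\<dots> = (if p = j \<and> q = j then 1 else 0)" by simp
      finally show ?thesis .
    qed
    have "(\<Sum>j\<in>UNIV. if p = j \<and> q = j then 1 else 0) = (mat 1 $ p $ q :: complex)"
      by (cases "p = q") (auto simp: mat_def intro!: sum.neutral)
    then show ?thesis by (simp add: sum_component e)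
  qed
  then show ?thesis by (simp add: vec_eq_iff)
qed

theorem theorem6:
  fixes C :: "(complex^'n::finite) set" and P :: "'n op"
    and N :: "'n op \<Rightarrow> 'n op"
    and I J :: "'i set" and E :: "'i \<Rightarrow> 'n op" and \<alpha> :: "'i \<Rightarrow> 'i \<Rightarrow> complex"
  assumes "csubspace_vec C"
    and "orth_projector_onto P C"
    and "semi_positive N" and "trace_preserving N"
    and "finite I" and "J \<subseteq> I" and "J \<noteq> {}"
    and "\<And>\<rho>. N \<rho> = (\<Sum>i\<in>I. smult_op (if i \<in> J then -1 else 1) (E i ** \<rho> ** adj (E i)))"
    and "\<And>i j. i \<in> I \<Longrightarrow> j \<in> I \<Longrightarrow> \<alpha> i j = cnj (\<alpha> j i)"
    and "\<And>i j. i \<in> I \<Longrightarrow> j \<in> I \<Longrightarrow> P ** adj (E i) ** E j ** P = smult_op (\<alpha> i j) P"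
  shows "\<exists>R. CPTP R \<and> (\<forall>\<sigma>. R (N (P ** \<sigma> ** P)) = P ** \<sigma> ** P)"
proof -
  have PP: "P ** P = P" and Ph: "adj P = P" using assms(2) unfolding orth_projector_onto_def by auto
  have finI: "finite I" by (rule assms(5))
  define s where "s i = (if i \<in> J then -1 else 1 :: complex)" for i
  have Nform: "\<And>\<rho>. N \<rho> = (\<Sum>i\<in>I. smult_op (s i) (E i ** \<rho> ** adj (E i)))"
    using assms(8) s_def by simp
  have hyp: "\<And>i j. i\<in>I \<Longrightarrow> j\<in>I \<Longrightarrow> P ** adj (E i) ** E j ** P = smult_op (\<alpha> i j) P"
    by (rule assms(10))
  define M where "M = (\<Sum>i\<in>I. smult_op (s i) (adj (E i) ** E i))"
  have trM: "mtrace (M ** X) = mtrace X" for X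
  proof -
    have "mtrace X = mtrace (N X)" using assms(4) unfolding trace_preserving_def by simp
    also have "\<dots> = (\<Sum>i\<in>I. s i * mtrace (adj (E i) ** (E i ** X)))"
      by (simp add: Nform mtrace_sum mtrace_smult mtrace_cyc[of "E _ ** X"])
    also have "\<dots> = mtrace (M ** X)"
      by (simp add: M_def mul_sum_left smult_mul_left mtrace_sum mtrace_smult matrix_mul_assoc)
    finally show ?thesis by simp
  qed
  have M1: "M = mat 1" using M_test trM by blast
  define a0 where "a0 = (\<Sum>i\<in>I. s i * \<alpha> i i)"
  have a0P: "smult_op a0 P = P"
  proof -
    have "P ** M ** P = (\<Sum>i\<in>I. smult_op (s i) (P ** adj (E i) ** E i ** P))"
      by (simp add: M_def mul_sum_left mul_sum_right smult_mul_left smult_mul_right matrix_mul_assoc)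
    also have "\<dots> = (\<Sum>i\<in>I. smult_op (s i * \<alpha> i i) P)"
      by (rule sum.cong) (simp_all add: hyp smult_smult)
    also have "\<dots> = smult_op a0 P" by (simp add: a0_def smult_sum_sc)
    finally show ?thesis using M1 PP by simp
  qed
  show ?thesis
  proof (cases "P = 0")
    case True
    have "CPTP (\<lambda>Y. \<Sum>k\<in>{()}. mat 1 ** Y ** adj (mat 1))" by (rule kraus_CPTP) simp_all
    then have "CPTP (\<lambda>Y. Y)" by simp
    moreover have "N 0 = 0" by (simp add: Nform)
    ultimately show ?thesis using True by (intro exI[of _ "\<lambda>Y. Y"]) simp
  next
    case False
    then obtain v where v: "P *v v \<noteq> 0" by (metis matrix_eq matrix_vector_mult_0)
    define u where "u = P *v v"
    have Pu: "P *v u = u" unfolding u_def by (simp add: matrix_vector_mul_assoc PP)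
    define t where "t = (\<Sum>i\<in>UNIV. (cmod (u $ i))^2)"
    have uu: "cinner u u = of_real t" unfolding t_def by (rule cinner_self_real)
    have "t \<noteq> 0" using v u_def cinner_self_eq0[of u] uu by auto
    moreover have "t \<ge> 0" unfolding t_def by (simp add: sum_nonneg)
    ultimately have tpos: "t > 0" by simp
    define c where "c = complex_of_real (1 / sqrt t) *s u"
    have cc: "cinner c c = 1"
      unfolding c_def using tpos
      by (simp add: cinner_smult_left cinner_smult_right uu power2_eq_square[symmetric]
           flip: of_real_mult of_real_power)
    have Pc: "P *v c = c" unfolding c_def by (simp add: mat_vec_smult Pu)
    define w where "w i = E i *v c" for i
    obtain r f where on: "orthonormal r f" and sp: "\<forall>k<r. f k \<in> cspan_fam w I"
       and rep: "\<forall>i\<in>I. w i = (\<Sum>k<r. cinner (f k) (w i) *s f k)"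
      using gram_schmidt[OF finI, of w] by blast
    have "\<forall>k. \<exists>b. k < r \<longrightarrow> f k = (\<Sum>j\<in>I. b j *s w j)"
      using sp unfolding cspan_fam_def by blast
    then obtain \<beta> where \<beta>: "\<And>k. k < r \<Longrightarrow> f k = (\<Sum>j\<in>I. \<beta> k j *s w j)"
      by metis
    define F where "F k = (\<Sum>j\<in>I. smult_op (\<beta> k j) (E j))" for k
    have Fc: "\<And>k. k < r \<Longrightarrow> F k *v c = f k"
      by (simp add: F_def \<beta> sum_mat_vec smult_mat_vec w_def)
    define \<gamma> where "\<gamma> k i = (\<Sum>j\<in>I. cnj (\<beta> k j) * \<alpha> j i)" for k i
    have K1: "P ** adj (F k) ** E i ** P = smult_op (\<gamma> k i) P" if "i \<in> I" for k i
    proof -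
      have "P ** adj (F k) ** E i ** P = (\<Sum>j\<in>I. smult_op (cnj (\<beta> k j)) (P ** adj (E j) ** E i ** P))"
        by (simp add: F_def adj_sum adj_smult mul_sum_left mul_sum_right smult_mul_left smult_mul_right)
      also have "\<dots> = (\<Sum>j\<in>I. smult_op (cnj (\<beta> k j) * \<alpha> j i) P)"
        by (rule sum.cong) (simp_all add: hyp that smult_smult)
      also have "\<dots> = smult_op (\<gamma> k i) P" by (simp add: \<gamma>_def smult_sum_sc)
      finally show ?thesis .
    qed
    define \<mu> where "\<mu> k k' = (\<Sum>j\<in>I. \<beta> k' j * \<gamma> k j)" for k k'
    have K2: "P ** adj (F k) ** F k' ** P = smult_op (\<mu> k k') P" for k k'
    proof -
      have "P ** adj (F k) ** F k' ** P = (\<Sum>j\<in>I. smult_op (\<beta> k' j) (P ** adj (F k) ** E j ** P))"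
        by (simp add: F_def[of k'] mul_sum_left mul_sum_right smult_mul_left smult_mul_right)
      also have "\<dots> = (\<Sum>j\<in>I. smult_op (\<beta> k' j * \<gamma> k j) P)"
        by (rule sum.cong) (simp_all add: K1 smult_smult)
      also have "\<dots> = smult_op (\<mu> k k') P" by (simp add: \<mu>_def smult_sum_sc)
      finally show ?thesis .
    qed
    have mu: "\<mu> k k' = (if k = k' then 1 else 0)" if "k < r" "k' < r" for k k'
    proof -
      have "\<mu> k k' = cinner (F k *v c) (F k' *v c)"
        by (rule inner_from_P[OF K2 Pc Ph cc, symmetric])
      then show ?thesis using on that Fc unfolding orthonormal_def by simp
    qed
    have gam: "cinner (f k) (w i) = \<gamma> k i" if "k < r" "i \<in> I" for k i
    proof -
      have "cinner (F k *v c) (E i *v c) = \<gamma> k i" by (rule inner_from_P[OF K1[OF that(2)] Pc Ph cc])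
      then show ?thesis using Fc[OF that(1)] by (simp add: w_def)
    qed
    have parseval: "\<alpha> i i = (\<Sum>k<r. cnj (\<gamma> k i) * \<gamma> k i)" if "i \<in> I" for i
    proof -
      have "\<alpha> i i = cinner (w i) (w i)"
        using inner_from_P[OF hyp[OF that that] Pc Ph cc] w_def by simp
      also have "\<dots> = cinner (\<Sum>k<r. \<gamma> k i *s f k) (w i)"
        using rep that gam by (metis (no_types, lifting) lessThan_iff sum.cong)
      also have "\<dots> = (\<Sum>k<r. cnj (\<gamma> k i) * \<gamma> k i)"
        by (simp add: cinner_sum_left cinner_smult_left gam that)
      finally show ?thesis .
    qed
    have PP': "\<And>A. A ** P ** P = A ** P" by (simp add: matrix_mul_assoc[symmetric] PP)
    have K1': "P ** adj (E i) ** F k ** P = smult_op (cnj (\<gamma> k i)) P" if "i \<in> I" for k i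
    proof -
      have "adj (P ** adj (F k) ** E i ** P) = P ** adj (E i) ** F k ** P"
        by (simp add: adj_mult Ph matrix_mul_assoc)
      then show ?thesis using K1[OF that] by (simp add: adj_smult Ph)
    qed
    define Pi where "Pi = (\<Sum>k<r. F k ** P ** adj (F k))"
    have Pih: "adj Pi = Pi" by (simp add: Pi_def adj_sum adj_mult Ph matrix_mul_assoc)
    have PiPi: "Pi ** Pi = Pi"
    proof -
      have "Pi ** Pi = (\<Sum>k<r. \<Sum>k'<r. F k ** (P ** adj (F k) ** F k' ** P) ** adj (F k'))"
        by (simp add: Pi_def mul_sum_left mul_sum_right matrix_mul_assoc) (rule sum.swap)
      also have "\<dots> = (\<Sum>k<r. \<Sum>k'<r. smult_op (\<mu> k k') (F k ** P ** adj (F k')))"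
        by (simp add: K2 smult_mul_left smult_mul_right)
      also have "\<dots> = (\<Sum>k<r. F k ** P ** adj (F k))"
      proof (rule sum.cong[OF refl])
        fix k assume k: "k \<in> {..<r}"
        have "(\<Sum>k'<r. smult_op (\<mu> k k') (F k ** P ** adj (F k')))
            = (\<Sum>k'<r. if k' = k then F k ** P ** adj (F k) else 0)"
          by (rule sum.cong) (use k in \<open>auto simp: mu\<close>)
        then show "(\<Sum>k'<r. smult_op (\<mu> k k') (F k ** P ** adj (F k'))) = F k ** P ** adj (F k)"
          using k by simp
      qed
      finally show ?thesis by (simp add: Pi_def)
    qed
    define Q where "Q = mat 1 - Pi"
    have Qh: "adj Q = Q" by (simp add: Q_def adj_diff Pih)
    have QQ: "Q ** Q = Q" by (simp add: Q_def mul_diff_left mul_diff_right PiPi)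
    have QQ': "\<And>A. A ** Q ** Q = A ** Q" by (simp add: matrix_mul_assoc[symmetric] QQ)
    have QEP: "Q ** E i ** P = 0" if i: "i \<in> I" for i
    proof -
      have "adj (Q ** E i ** P) ** (Q ** E i ** P) = P ** adj (E i) ** Q ** E i ** P"
        by (simp add: adj_mult Ph Qh matrix_mul_assoc QQ')
      also have "\<dots> = P ** adj (E i) ** E i ** P -
          (\<Sum>k<r. (P ** adj (E i) ** F k ** P) ** (P ** adj (F k) ** E i ** P))"
        by (simp add: Q_def Pi_def mul_diff_left mul_diff_right mul_sum_left mul_sum_right
            matrix_mul_assoc PP')
      also have "\<dots> = smult_op (\<alpha> i i) P - (\<Sum>k<r. smult_op (cnj (\<gamma> k i) * \<gamma> k i) P)"
        by (simp add: hyp i K1 K1' smult_mul_left smult_mul_right smult_smult PP mult.commute)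
      also have "\<dots> = 0"
        by (simp add: parseval[OF i] smult_sum_sc)
      finally show ?thesis by (rule adj_mul_self_zero)
    qed
    define B where "B j = ((\<chi> a b. if a = undefined \<and> b = j then 1 else 0) :: 'n op)" for j
    define G where "G x = (case x of Inl k \<Rightarrow> P ** adj (F k) | Inr j \<Rightarrow> B j ** Q)" for x
    define Ks where "Ks = {..<r} <+> (UNIV :: 'n set)"
    have finKs: "finite Ks" by (simp add: Ks_def)
    have sumG: "(\<Sum>x\<in>Ks. g x) = (\<Sum>k<r. g (Inl k)) + (\<Sum>j\<in>UNIV. g (Inr j))"
      for g :: "nat + 'n \<Rightarrow> 'n op" by (simp add: Ks_def sum.Plus)
    have GG: "(\<Sum>x\<in>Ks. adj (G x) ** G x) = mat 1"
    proof -
      have a: "(\<Sum>k<r. adj (G (Inl k)) ** G (Inl k)) = Pi"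
        by (simp add: G_def adj_mult Ph matrix_mul_assoc PP' Pi_def)
      have "(\<Sum>j\<in>UNIV. adj (G (Inr j)) ** G (Inr j)) = adj Q ** (\<Sum>j\<in>UNIV. adj (B j) ** B j) ** Q"
        by (simp add: G_def adj_mult mul_sum_left mul_sum_right matrix_mul_assoc)
      also have "\<dots> = Q"
      proof -
        have u: "(\<Sum>j\<in>UNIV. adj (B j) ** B j) = mat 1" unfolding B_def by (rule unit_sum)
        show ?thesis by (simp add: u Qh QQ)
      qed
      finally show ?thesis using a by (simp add: sumG Q_def)
    qed
    define R where "R Y = (\<Sum>x\<in>Ks. G x ** Y ** adj (G x))" for Y
    have CR: "CPTP R" unfolding R_def by (rule kraus_CPTP[OF finKs GG])
    have main: "R (N (P ** \<sigma> ** P)) = P ** \<sigma> ** P" for \<sigma>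
    proof -
      have T1: "G (Inl k) ** (E i ** (P ** \<sigma> ** P) ** adj (E i)) ** adj (G (Inl k))
          = smult_op (\<gamma> k i * cnj (\<gamma> k i)) (P ** \<sigma> ** P)" if i: "i \<in> I" for k i
      proof -
        have "G (Inl k) ** (E i ** (P ** \<sigma> ** P) ** adj (E i)) ** adj (G (Inl k))
            = (P ** adj (F k) ** E i ** P) ** \<sigma> ** (P ** adj (E i) ** F k ** P)"
          by (simp add: G_def adj_mult Ph matrix_mul_assoc)
        also have "\<dots> = smult_op (\<gamma> k i * cnj (\<gamma> k i)) (P ** \<sigma> ** P)"
          by (simp add: K1[OF i] K1'[OF i] smult_mul_left smult_mul_right smult_smult matrix_mul_assoc mult.commute)
        finally show ?thesis .
      qed
      have T2: "G (Inr j) ** (E i ** (P ** \<sigma> ** P) ** adj (E i)) ** adj (G (Inr j)) = 0"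
        if i: "i \<in> I" for j i
      proof -
        have "G (Inr j) ** (E i ** (P ** \<sigma> ** P) ** adj (E i)) ** adj (G (Inr j))
            = B j ** (Q ** E i ** P) ** \<sigma> ** P ** adj (E i) ** adj (B j ** Q)"
          by (simp add: G_def matrix_mul_assoc)
        then show ?thesis by (simp add: QEP[OF i])
      qed
      have "R (N (P ** \<sigma> ** P)) =
          (\<Sum>k<r. \<Sum>i\<in>I. smult_op (s i) (G (Inl k) ** (E i ** (P ** \<sigma> ** P) ** adj (E i)) ** adj (G (Inl k))))
        + (\<Sum>j\<in>UNIV. \<Sum>i\<in>I. smult_op (s i) (G (Inr j) ** (E i ** (P ** \<sigma> ** P) ** adj (E i)) ** adj (G (Inr j))))"
        unfolding R_def sumG Nform
        by (simp add: mul_sum_left mul_sum_right smult_mul_left smult_mul_right)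
      also have "\<dots> = (\<Sum>k<r. \<Sum>i\<in>I. smult_op (s i * (\<gamma> k i * cnj (\<gamma> k i))) (P ** \<sigma> ** P))"
        by (simp add: T1 T2 smult_smult)
      also have "\<dots> = smult_op (\<Sum>i\<in>I. s i * (\<Sum>k<r. cnj (\<gamma> k i) * \<gamma> k i)) (P ** \<sigma> ** P)"
        by (simp add: smult_sum_sc sum.swap[of _ "{..<r}" I] sum_distrib_left mult.commute)
      also have "\<dots> = smult_op a0 (P ** \<sigma> ** P)"
        by (simp add: a0_def parseval)
      also have "\<dots> = P ** \<sigma> ** P"
        by (simp add: smult_mul_left[symmetric] a0P)
      finally show ?thesis .
    qed
    show ?thesis using CR main by blast
  qed
qed

end
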